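(* Let $P$ be a program and let $\tau = \alpha \cdot \mathit{issue}(p,t)\cdot \beta\cdot \mathit{com}(p,t)$ be a minimal anomaly of $P$ such that $\mathit{issue}(p,t)$ happens before $\mathit{com}(p,t)$ through $\beta$. Then there exists an event $\mathit{issue}(p',t')$ in $\beta$ such that $(\mathit{issue}(p',t'),\mathit{com}(p,t))\in\mathsf{hb}$.
   Context: Programs: parallel compositions of processes, each a sequence of transactions (reads of shared variables into registers, writes of register expressions to shared variables, assume statements, delimited by begin and commit). Snapshot isolation (SI): a transaction reads/writes a local snapshot of the central memory taken at its begin and can commit (publishing its writes) only if no transaction committed after its begin wrote a variable it writes. Serializability: every transaction executes atomically. Traces: each transaction $t$ of process $p$ yields an issue event $\mathit{issue}(p,t)$ (begin, reads, local writes) and a commit event $\mathit{com}(p,t)$. Dependencies: $\mathsf{po}$ (program order), $\mathsf{rf}$ (write-read), $\mathsf{st}$ (store order between writes to the same variable), $\mathsf{cf}$ (conflict: a read does not see a write to the same variable that would affect it if visible), and issue-to-commit of the same transaction; $\mathsf{hb}^1$ is their union, $\mathsf{hb}$ (happens-before) its transitive closure. An anomaly of $P$ is a trace of an SI execution of $P$ that is not a trace of any serializable execution. "$a$ happens before $b$ through $\beta$" in a trace $\alpha\cdot a\cdot\beta\cdot b\cdot\gamma$ means there is a nonempty subsequence $c_1\cdots c_n$ of $\beta$ with $c_i\to_{\mathsf{hb}^1}c_{i+1}$ for all $i\in[0,n]$, $c_0=a$, $c_{n+1}=b$. A transaction is delayed in a trace if its issue happens before its commit through the events between them; an anomaly is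 minimal if it has the least number of delayed transactions among all anomalies of $P$. *)

theory Defs
  imports Main
begin

datatype ('x, 'r) instr =
    Read 'r 'x
  | Write 'x "('r \<Rightarrow> int) \<Rightarrow> int"
  | Assume "('r \<Rightarrow> int) \<Rightarrow> bool"

type_synonym ('x, 'r) txn = "('x, 'r) instr list"      (* body between begin and commit *)
type_synonym ('x, 'r) process = "('x, 'r) txn list"
type_synonym ('x, 'r) prog = "('x, 'r) process list"

fun run :: "('x \<Rightarrow> int) \<Rightarrow> ('x, 'r) instr list \<Rightarrow> ('r \<Rightarrow> int) \<Rightarrow> ('x \<rightharpoonup> int)
            \<Rightarrow> (('r \<Rightarrow> int) \<times> ('x \<rightharpoonup> int)) option" where
  "run m [] \<rho> b = Some (\<rho>, b)"
| "run m (Read r x # is) \<rho> b =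
     run m is (\<rho>(r := (case b x of Some v \<Rightarrow> v | None \<Rightarrow> m x))) b"
| "run m (Write x e # is) \<rho> b = run m is \<rho> (b(x \<mapsto> e \<rho>))"
| "run m (Assume c # is) \<rho> b = (if c \<rho> then run m is \<rho> b else None)"

text \<open>Variables written by a transaction, and variables read from the snapshot
  (reads not preceded by a local write to the same variable).\<close>
fun wvars :: "('x, 'r) instr list \<Rightarrow> 'x set" where
  "wvars [] = {}"
| "wvars (Write x e # is) = insert x (wvars is)"
| "wvars (_ # is) = wvars is"

fun xreads :: "'x set \<Rightarrow> ('x, 'r) instr list \<Rightarrow> 'x set" where
  "xreads W [] = {}"
| "xreads W (Read r x # is) = (if x \<in> W then {} else {x}) \<union> xreads W is"
| "xreads W (Write x e # is) = xreads (insert x W) is"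
| "xreads W (Assume c # is) = xreads W is"

definition ws :: "('x, 'r) prog \<Rightarrow> nat \<Rightarrow> nat \<Rightarrow> 'x set" where
  "ws P p t = wvars (P ! p ! t)"

definition rs :: "('x, 'r) prog \<Rightarrow> nat \<Rightarrow> nat \<Rightarrow> 'x set" where
  "rs P p t = xreads {} (P ! p ! t)"

text \<open>Iss p t = issue(p,t) (begin, reads, local writes); Com p t = com(p,t);
  t is the index of the transaction in process p.\<close>
datatype event = Iss nat nat | Com nat nat

fun proc :: "event \<Rightarrow> nat" where
  "proc (Iss p t) = p" | "proc (Com p t) = p"

fun txn :: "event \<Rightarrow> nat" where
  "txn (Iss p t) = t" | "txn (Com p t) = t"

record ('x, 'r) conf =
  mem  :: "'x \<Rightarrow> int"
  pcs  :: "nat \<Rightarrow> nat"                       (* next transaction of each process *)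
  regs :: "nat \<Rightarrow> 'r \<Rightarrow> int"
  pend :: "nat \<Rightarrow> (('x \<rightharpoonup> int) \<times> nat) option"
          (* issued, uncommitted transaction: local writes, commit-log length at begin *)
  clog :: "'x set list"                      (* write sets of committed txns, in commit order *)

definition init_conf :: "('x, 'r) conf" where
  "init_conf = \<lparr>mem = (\<lambda>_. 0), pcs = (\<lambda>_. 0), regs = (\<lambda>_ _. 0),
                pend = (\<lambda>_. None), clog = []\<rparr>"

inductive si_step :: "('x, 'r) prog \<Rightarrow> ('x, 'r) conf \<Rightarrow> event \<Rightarrow> ('x, 'r) conf \<Rightarrow> bool"
  for P where
  issue: "\<lbrakk> p < length P; pcs c p = t; t < length (P ! p); pend c p = None;
            run (mem c) (P ! p ! t) (regs c p) Map.empty = Some (\<rho>, b) \<rbrakk>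
          \<Longrightarrow> si_step P c (Iss p t)
                (c\<lparr>regs := (regs c)(p := \<rho>),
                   pend := (pend c)(p := Some (b, length (clog c)))\<rparr>)"
| commit: "\<lbrakk> pend c p = Some (b, k); pcs c p = t;
             \<forall>i. k \<le> i \<and> i < length (clog c) \<longrightarrow> clog c ! i \<inter> dom b = {} \<rbrakk>
          \<Longrightarrow> si_step P c (Com p t)
                (c\<lparr>mem := (\<lambda>x. case b x of Some v \<Rightarrow> v | None \<Rightarrow> mem c x),
                   pcs := (pcs c)(p := Suc t),
                   pend := (pend c)(p := None),
                   clog := clog c @ [dom b]\<rparr>)"

inductive si_exec :: "('x, 'r) prog \<Rightarrow> ('x, 'r) conf \<Rightarrow> event list \<Rightarrow> bool" for P where
  start: "si_exec P init_conf []"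
| step: "\<lbrakk> si_exec P c \<tau>; si_step P c e c' \<rbrakk> \<Longrightarrow> si_exec P c' (\<tau> @ [e])"

definition si_traces :: "('x, 'r) prog \<Rightarrow> event list set" where
  "si_traces P = {\<tau>. \<exists>c. si_exec P c \<tau>}"

text \<open>Serializable executions: every transaction executes atomically, i.e. its
  issue is immediately followed by its commit (nothing interleaves).\<close>
definition ser_traces :: "('x, 'r) prog \<Rightarrow> event list set" where
  "ser_traces P = {\<tau> \<in> si_traces P. \<forall>i p t. Suc i < length \<tau> \<longrightarrow>
                      \<tau> ! i = Iss p t \<longrightarrow> \<tau> ! Suc i = Com p t}"

definition po_rel :: "event list \<Rightarrow> (event \<times> event) set" where
  "po_rel \<tau> = {(\<tau> ! i, \<tau> ! j) | i j. i < j \<and> j < length \<tau> \<and>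
                 proc (\<tau> ! i) = proc (\<tau> ! j) \<and> txn (\<tau> ! i) \<noteq> txn (\<tau> ! j)}"

definition ito_rel :: "event list \<Rightarrow> (event \<times> event) set" where
  "ito_rel \<tau> = {(Iss p t, Com p t) | p t. Iss p t \<in> set \<tau> \<and> Com p t \<in> set \<tau>}"

definition rf_rel :: "('x, 'r) prog \<Rightarrow> event list \<Rightarrow> ('x \<times> event \<times> event) set" where
  "rf_rel P \<tau> = {(x, \<tau> ! i, \<tau> ! j) | x i j p t p' t'. i < j \<and> j < length \<tau> \<and>
      \<tau> ! i = Com p t \<and> \<tau> ! j = Iss p' t' \<and> x \<in> ws P p t \<and> x \<in> rs P p' t' \<and>
      (\<forall>k q s. i < k \<and> k < j \<and> \<tau> ! k = Com q s \<longrightarrow> x \<notin> ws P q s)}"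

definition st_rel :: "('x, 'r) prog \<Rightarrow> event list \<Rightarrow> ('x \<times> event \<times> event) set" where
  "st_rel P \<tau> = {(x, \<tau> ! i, \<tau> ! j) | x i j p t p' t'. i < j \<and> j < length \<tau> \<and>
      \<tau> ! i = Com p t \<and> \<tau> ! j = Com p' t' \<and> x \<in> ws P p t \<and> x \<in> ws P p' t'}"

definition cf_rel :: "('x, 'r) prog \<Rightarrow> event list \<Rightarrow> ('x \<times> event \<times> event) set" where
  "cf_rel P \<tau> = {(x, \<tau> ! i, \<tau> ! j) | x i j p t p' t'. i < j \<and> j < length \<tau> \<and>
      \<tau> ! i = Iss p t \<and> \<tau> ! j = Com p' t' \<and> (p, t) \<noteq> (p', t') \<and>
      x \<in> rs P p t \<and> x \<in> ws P p' t'}"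

definition hb1 :: "('x, 'r) prog \<Rightarrow> event list \<Rightarrow> (event \<times> event) set" where
  "hb1 P \<tau> = po_rel \<tau> \<union> ito_rel \<tau> \<union>
     {(e, e'). \<exists>x. (x, e, e') \<in> rf_rel P \<tau> \<union> st_rel P \<tau> \<union> cf_rel P \<tau>}"

definition hb :: "('x, 'r) prog \<Rightarrow> event list \<Rightarrow> (event \<times> event) set" where
  "hb P \<tau> = (hb1 P \<tau>)\<^sup>+"

text \<open>The trace abstracted from the interleaving order: events and dependencies.\<close>
definition trace_of :: "('x, 'r) prog \<Rightarrow> event list \<Rightarrow>
    event set \<times> (event \<times> event) set \<times> ('x \<times> event \<times> event) set
      \<times> ('x \<times> event \<times> event) set \<times> ('x \<times> event \<times> event) set" where
  "trace_of P \<tau> = (set \<tau>, po_rel \<tau>, rf_rel P \<tau>, st_rel P \<tau>, cf_rel P \<tau>)"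

definition anomaly :: "('x, 'r) prog \<Rightarrow> event list \<Rightarrow> bool" where
  "anomaly P \<tau> \<longleftrightarrow> \<tau> \<in> si_traces P \<and> (\<forall>\<sigma> \<in> ser_traces P. trace_of P \<sigma> \<noteq> trace_of P \<tau>)"

definition hb_through :: "('x, 'r) prog \<Rightarrow> event list \<Rightarrow> nat \<Rightarrow> nat \<Rightarrow> bool" where
  "hb_through P \<tau> i j \<longleftrightarrow> i < j \<and> j < length \<tau> \<and>
     (\<exists>ks. ks \<noteq> [] \<and> sorted_wrt (<) ks \<and> (\<forall>k \<in> set ks. i < k \<and> k < j) \<and>
        (let cs = i # ks @ [j] in
           \<forall>m. Suc m < length cs \<longrightarrow> (\<tau> ! (cs ! m), \<tau> ! (cs ! Suc m)) \<in> hb1 P \<tau>))"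

definition delayed :: "('x, 'r) prog \<Rightarrow> event list \<Rightarrow> nat \<times> nat \<Rightarrow> bool" where
  "delayed P \<tau> pt \<longleftrightarrow> (\<exists>i j. \<tau> ! i = Iss (fst pt) (snd pt) \<and> \<tau> ! j = Com (fst pt) (snd pt)
                            \<and> hb_through P \<tau> i j)"

definition num_delayed :: "('x, 'r) prog \<Rightarrow> event list \<Rightarrow> nat" where
  "num_delayed P \<tau> = card {pt. delayed P \<tau> pt}"

definition minimal_anomaly :: "('x, 'r) prog \<Rightarrow> event list \<Rightarrow> bool" where
  "minimal_anomaly P \<tau> \<longleftrightarrow> anomaly P \<tau> \<and>
     (\<forall>\<sigma>. anomaly P \<sigma> \<longrightarrow> num_delayed P \<tau> \<le> num_delayed P \<sigma>)"

end

theory Submission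
  imports Defs
begin

definition invI :: "('x, 'r) prog \<Rightarrow> ('x, 'r) conf \<Rightarrow> bool" where
  "invI P c \<longleftrightarrow> (\<forall>q b k. pend c q = Some (b, k) \<longrightarrow> dom b = ws P q (pcs c q))"

lemma run_dom: "run m is \<rho> b = Some (\<rho>', b') \<Longrightarrow> dom b' = dom b \<union> wvars is"
proof (induction m "is" \<rho> b rule: run.induct)
  case (4 m c "is" \<rho> b)
  then show ?case by (auto split: if_splits)
qed auto

lemma invI_init: "invI P init_conf"
  by (simp add: invI_def init_conf_def)

lemma invI_step: "si_step P c e c' \<Longrightarrow> invI P c \<Longrightarrow> invI P c'"
proof (induction rule: si_step.induct)
  case (issue p c t \<rho> b)
  then show ?case using run_dom[OF issue(5)] by (auto simp: invI_def ws_def)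
next
  case (commit c p b k t)
  then show ?case by (auto simp: invI_def)
qed

lemma invI_exec: "si_exec P c \<tau> \<Longrightarrow> invI P c"
  by (induction rule: si_exec.induct) (auto intro: invI_init invI_step)

inductive si_steps :: "('x, 'r) prog \<Rightarrow> ('x, 'r) conf \<Rightarrow> event list \<Rightarrow> ('x, 'r) conf \<Rightarrow> bool"
  for P where
  srefl: "si_steps P c [] c"
| sstep: "\<lbrakk> si_steps P c \<sigma> c'; si_step P c' e c'' \<rbrakk> \<Longrightarrow> si_steps P c (\<sigma> @ [e]) c''"

lemma exec_split: "si_exec P c \<tau> \<Longrightarrow> \<tau> = \<tau>1 @ \<tau>2 \<Longrightarrow>
   \<exists>c1. si_exec P c1 \<tau>1 \<and> si_steps P c1 \<tau>2 c"
proof (induction arbitrary: \<tau>2 rule: si_exec.induct)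
  case start
  then show ?case by (auto intro: si_exec.start si_steps.srefl)
next
  case (step c \<tau> e c')
  show ?case
  proof (cases "\<tau>2 = []")
    case True
    then show ?thesis using step by (auto intro: si_exec.step si_steps.srefl)
  next
    case False
    then obtain \<tau>2' where t2: "\<tau>2 = \<tau>2' @ [e]" and "\<tau> = \<tau>1 @ \<tau>2'"
      using step(4) by (metis append_assoc append_butlast_last_id butlast_append
          butlast_snoc last_appendR snoc_eq_iff_butlast)
    then obtain c1 where "si_exec P c1 \<tau>1" "si_steps P c1 \<tau>2' c" using step(3) by blast
    then show ?thesis using t2 step(2) by (auto intro: si_steps.sstep)
  qed
qed

lemma exec_snoc: "si_exec P c (\<tau> @ [e]) \<Longrightarrow> \<exists>c0. si_exec P c0 \<tau> \<and> si_step P c0 e c"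
  by (cases rule: si_exec.cases) auto

lemma step_pcs_mono: "si_step P c e c' \<Longrightarrow> pcs c q \<le> pcs c' q"
  by (induction rule: si_step.induct) auto

lemma segment:
  assumes "si_steps P c1 \<sigma> c2" "invI P c1" "pend c1 p = Some (b, k)" "pcs c1 p = t"
    "k \<le> length (clog c1)"
  shows "invI P c2 \<and> ((pend c2 p = Some (b, k) \<and> pcs c2 p = t \<and> k \<le> length (clog c2) \<and>
     (\<forall>q s. Com q s \<in> set \<sigma> \<longrightarrow> q \<noteq> p \<and>
        (\<exists>i. k \<le> i \<and> i < length (clog c2) \<and> clog c2 ! i = ws P q s))) \<or> t < pcs c2 p)"
  using assms
proof (induction rule: si_steps.induct)
  case (srefl c)
  then show ?case by auto
next
  case (sstep c \<sigma> c' e c'')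
  have IH: "invI P c' \<and> ((pend c' p = Some (b, k) \<and> pcs c' p = t \<and> k \<le> length (clog c') \<and>
     (\<forall>q s. Com q s \<in> set \<sigma> \<longrightarrow> q \<noteq> p \<and>
        (\<exists>i. k \<le> i \<and> i < length (clog c') \<and> clog c' ! i = ws P q s))) \<or> t < pcs c' p)"
    using sstep by blast
  have I'': "invI P c''" using IH invI_step sstep(2) by blast
  show ?case
  proof (cases "t < pcs c' p")
    case True
    then show ?thesis using I'' step_pcs_mono[OF sstep(2), of p] by auto
  next
    case False
    with IH have A: "pend c' p = Some (b, k)" "pcs c' p = t" "k \<le> length (clog c')"
      "\<forall>q s. Com q s \<in> set \<sigma> \<longrightarrow> q \<noteq> p \<and>
        (\<exists>i. k \<le> i \<and> i < length (clog c') \<and> clog c' ! i = ws P q s)" and I': "invI P c'"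
      by auto
    from sstep(2) show ?thesis
    proof (cases rule: si_step.cases)
      case (issue q s \<rho> b')
      then have "q \<noteq> p" using A by auto
      then show ?thesis using issue A I'' by auto
    next
      case (commit q b' k' s)
      show ?thesis
      proof (cases "q = p")
        case True
        then show ?thesis using commit A I'' by auto
      next
        case False
        have db: "dom b' = ws P q s" using I' commit unfolding invI_def by auto
        have "\<forall>q0 s0. Com q0 s0 \<in> set (\<sigma> @ [e]) \<longrightarrow> q0 \<noteq> p \<and>
          (\<exists>i. k \<le> i \<and> i < length (clog c'') \<and> clog c'' ! i = ws P q0 s0)"
        proof (intro allI impI)
          fix q0 s0 assume "Com q0 s0 \<in> set (\<sigma> @ [e])"
          then consider "Com q0 s0 \<in> set \<sigma>" | "q0 = q" "s0 = s" using commit by auto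
          then show "q0 \<noteq> p \<and>
            (\<exists>i. k \<le> i \<and> i < length (clog c'') \<and> clog c'' ! i = ws P q0 s0)"
          proof cases
            case 1
            then obtain i where "k \<le> i" "i < length (clog c')" "clog c' ! i = ws P q0 s0" "q0 \<noteq> p"
              using A by blast
            then show ?thesis using commit by (auto simp: nth_append)
          next
            case 2
            then show ?thesis using commit A False db
              by (auto intro!: exI[of _ "length (clog c')"])
          qed
        qed
        then show ?thesis using commit A I'' False by auto
      qed
    qed
  qed
qed

lemma beta_com:
  assumes "\<tau> \<in> si_traces P" "\<tau> = \<alpha> @ [Iss p t] @ \<beta> @ [Com p t]" "Com q s \<in> set \<beta>"
  shows "q \<noteq> p \<and> ws P q s \<inter> ws P p t = {}"
proof -
  obtain c where ex: "si_exec P c \<tau>" using assms(1) by (auto simp: si_traces_def)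
  have "\<tau> = (\<alpha> @ [Iss p t]) @ (\<beta> @ [Com p t])" using assms(2) by simp
  then obtain c1 where e1: "si_exec P c1 (\<alpha> @ [Iss p t])" and s1: "si_steps P c1 (\<beta> @ [Com p t]) c"
    using exec_split[OF ex] by blast
  obtain c0 where "si_exec P c0 \<alpha>" and st0: "si_step P c0 (Iss p t) c1" using exec_snoc[OF e1] by blast
  have "\<exists>b. pend c1 p = Some (b, length (clog c1)) \<and> pcs c1 p = t"
    using st0 by (cases rule: si_step.cases) auto
  then obtain b where pc1: "pend c1 p = Some (b, length (clog c1))" "pcs c1 p = t"
    by blast
  have I1: "invI P c1" using invI_exec[OF e1] .
  have db: "dom b = ws P p t" using I1 pc1 unfolding invI_def by auto
  from s1 obtain c2 where s2: "si_steps P c1 \<beta> c2" and st: "si_step P c2 (Com p t) c"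
    by (cases rule: si_steps.cases) auto
  note S = segment[OF s2 I1 pc1(1) pc1(2) order_refl]
  from st obtain b0 k0 where cm: "pend c2 p = Some (b0, k0)" "pcs c2 p = t"
    "\<forall>i. k0 \<le> i \<and> i < length (clog c2) \<longrightarrow> clog c2 ! i \<inter> dom b0 = {}"
    by (cases rule: si_step.cases) auto
  then have A: "pend c2 p = Some (b, length (clog c1))"
    "\<forall>q s. Com q s \<in> set \<beta> \<longrightarrow> q \<noteq> p \<and>
        (\<exists>i. length (clog c1) \<le> i \<and> i < length (clog c2) \<and> clog c2 ! i = ws P q s)"
    using S by auto
  then have "b0 = b" "k0 = length (clog c1)" using cm by auto
  then show ?thesis using A cm db assms(3) by fastforce
qed

lemma no_hb1:
  assumes "q \<noteq> p" "ws P q s \<inter> ws P p t = {}"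
  shows "(Com q s, Com p t) \<notin> hb1 P \<tau>"
proof -
  have "(Com q s, Com p t) \<notin> po_rel \<tau>"
  proof
    assume "(Com q s, Com p t) \<in> po_rel \<tau>"
    then obtain i j where "Com q s = \<tau> ! i" "Com p t = \<tau> ! j" "proc (\<tau> ! i) = proc (\<tau> ! j)"
      unfolding po_rel_def by blast
    then have "proc (Com q s) = proc (Com p t)" by simp
    then show False using assms by simp
  qed
  moreover have "(Com q s, Com p t) \<notin> ito_rel \<tau>" by (simp add: ito_rel_def)
  moreover have "(x, Com q s, Com p t) \<notin> rf_rel P \<tau>" for x
    unfolding rf_rel_def by auto
  moreover have "(x, Com q s, Com p t) \<notin> cf_rel P \<tau>" for x
    unfolding cf_rel_def by auto
  moreover have "(x, Com q s, Com p t) \<notin> st_rel P \<tau>" for x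
  proof
    assume "(x, Com q s, Com p t) \<in> st_rel P \<tau>"
    then obtain i j p0 t0 p1 t1 where "Com q s = \<tau> ! i" "Com p t = \<tau> ! j"
      "\<tau> ! i = Com p0 t0" "\<tau> ! j = Com p1 t1" "x \<in> ws P p0 t0" "x \<in> ws P p1 t1"
      unfolding st_rel_def by blast
    then show False using assms by auto
  qed
  ultimately show ?thesis unfolding hb1_def by blast
qed

theorem lemma4:
  fixes P :: "('x, 'r) prog" and \<tau> \<alpha> \<beta> :: "event list" and p t :: nat
  assumes "minimal_anomaly P \<tau>"
    and "\<tau> = \<alpha> @ [Iss p t] @ \<beta> @ [Com p t]"
    and "hb_through P \<tau> (length \<alpha>) (length \<alpha> + length \<beta> + 1)"
  shows "\<exists>p' t'. Iss p' t' \<in> set \<beta> \<and> (Iss p' t', Com p t) \<in> hb P \<tau>"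
proof -
  have tr: "\<tau> \<in> si_traces P" using assms(1) by (simp add: minimal_anomaly_def anomaly_def)
  define j where "j = length \<alpha> + length \<beta> + 1"
  obtain ks where ks: "ks \<noteq> []" "\<forall>k \<in> set ks. length \<alpha> < k \<and> k < j"
    "\<forall>m. Suc m < length (length \<alpha> # ks @ [j]) \<longrightarrow>
       (\<tau> ! ((length \<alpha> # ks @ [j]) ! m), \<tau> ! ((length \<alpha> # ks @ [j]) ! Suc m)) \<in> hb1 P \<tau>"
    using assms(3) unfolding hb_through_def j_def Let_def by blast
  define l where "l = last ks"
  have lin: "l \<in> set ks" using ks(1) by (simp add: l_def)
  have "(\<tau> ! ((length \<alpha> # ks @ [j]) ! length ks), \<tau> ! ((length \<alpha> # ks @ [j]) ! Suc (length ks))) \<in> hb1 P \<tau>"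
    using ks(3)[rule_format, of "length ks"] by simp
  moreover have "(length \<alpha> # ks @ [j]) ! length ks = l"
  proof -
    have e: "length \<alpha> # ks @ [j] = (length \<alpha> # butlast ks) @ [l, j]"
      using ks(1) by (simp add: l_def)
    have "length (length \<alpha> # butlast ks) = length ks" using ks(1) by simp
    moreover have "\<And>xs. (xs @ [l, j]) ! length xs = l" by simp
    ultimately show ?thesis unfolding e by metis
  qed
  moreover have "(length \<alpha> # ks @ [j]) ! Suc (length ks) = j" by (simp add: nth_append)
  moreover have "\<tau> ! j = Com p t" using assms(2) by (simp add: j_def nth_append)
  ultimately have h: "(\<tau> ! l, Com p t) \<in> hb1 P \<tau>" by simp
  have lr: "length \<alpha> < l" "l < j" using ks(2) lin by auto
  have el: "\<tau> ! l = \<beta> ! (l - length \<alpha> - 1)" "l - length \<alpha> - 1 < length \<beta>"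
    using lr assms(2) by (auto simp: j_def nth_append)
  then have inb: "\<tau> ! l \<in> set \<beta>" by simp
  show ?thesis
  proof (cases "\<tau> ! l")
    case (Iss p' t')
    then show ?thesis using h inb by (auto simp: hb_def)
  next
    case (Com q s)
    then show ?thesis using h inb beta_com[OF tr assms(2), of q s] no_hb1[of q p P s t \<tau>] by auto
  qed
qed

end
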